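(* Let $N\ge 3$, $\Delta\theta^*=2\pi/N$, $P\neq0$, and let $(\theta_k,\omega_k)_{k\ge1}$ be a solution of $$\theta_{k+1}=\theta_k+\Delta\theta^*,\qquad \omega_{k+1}-\omega_k=P\sin\theta_k\left[\frac{1}{\omega_k}+\frac{1}{\omega_{k+1}}\right]\quad(k\ge1)$$ with $\omega_k>0$, $\omega_k^2>|P|$ for all $k$, and $\theta_{k_0}\bmod 2\pi\in\{0,\Delta\theta^*/2\}$ for some $k_0$ (so it is $N$-periodic). Then this periodic orbit is stable but not attractive, in the following sense. Fix an index $k_1$ and $\varepsilon\neq 0$, and let $(\omega'_k)_{k\ge1}$ be a positive sequence with $\omega'_{k_1}=\omega_{k_1}+\varepsilon$ satisfying the same recurrence with the same $(\theta_k)$ and $(\omega'_k)^2>|P|$ for all $k$. Then $(\theta_k,\omega'_k)$ is again $N$-periodic, $\omega'_k\neq\omega_k$ for every $k$ (so the perturbed solution does not converge to the original periodic orbit), and $\sup_k|\omega'_k-\omega_k|\to 0$ as $\varepsilon\to 0$.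
   Context: This is the "discrete zero dynamics" of a devil-stick with $\phi=\pm\pi/2$; in the paper $P=\pm\frac{g(\Delta\theta^* )^2}{2R\sin(\Delta\theta^* )}$ with constants $g,R>0$. The condition $\omega_k^2>|P|$ for all $k$ is the paper's Assumption 1. *)

theory Defs
  imports Complex_Main
begin

definition zd_solution :: "real \<Rightarrow> real \<Rightarrow> (nat \<Rightarrow> real) \<Rightarrow> (nat \<Rightarrow> real) \<Rightarrow> bool" where
  "zd_solution P dth theta omega \<longleftrightarrow>
     (\<forall>k\<ge>1. theta (Suc k) = theta k + dth \<and>
             omega (Suc k) - omega k = P * sin (theta k) * (1 / omega k + 1 / omega (Suc k)))"

definition admissible :: "real \<Rightarrow> (nat \<Rightarrow> real) \<Rightarrow> bool" where
  "admissible P omega \<longleftrightarrow> (\<forall>k\<ge>1. omega k > 0 \<and> (omega k)\<^sup>2 > \<bar>P\<bar>)"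

definition periodic_seq :: "nat \<Rightarrow> (nat \<Rightarrow> real) \<Rightarrow> bool" where
  "periodic_seq N omega \<longleftrightarrow> (\<forall>k\<ge>1. omega (k + N) = omega k)"

end

theory Submission
  imports Defs
begin

lemma sin_sum_2pi:
  fixes x y :: real and n :: int
  assumes "x + y = 2*pi*real_of_int n"
  shows "sin x + sin y = 0"
proof -
  have "y = 2*pi*real_of_int n - x" using assms by simp
  then have "sin y = sin (2*pi*real_of_int n) * cos x - cos (2*pi*real_of_int n) * sin x"
    by (simp add: sin_diff)
  then show ?thesis by simp
qed

lemma step_id:
  fixes x y u v a :: real
  assumes "x > 0" "y > 0" "u > 0" "v > 0"
    and "x - u = a*(1/u+1/x)" "y - v = a*(1/v+1/y)"
  shows "(x-y)*(1 + a/(x*y)) = (u-v)*(1 - a/(u*v))"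
proof -
  have e1: "x - a/x = u + a/u" using assms(5) by (simp add: field_simps)
  have e2: "y - a/y = v + a/v" using assms(6) by (simp add: field_simps)
  have "(x-y)*(1 + a/(x*y)) = (x - a/x) - (y - a/y)" using assms(1,2) by (simp add: field_simps)
  also have "\<dots> = (u + a/u) - (v + a/v)" using e1 e2 by simp
  also have "\<dots> = (u-v)*(1 - a/(u*v))" using assms(3,4) by (simp add: field_simps)
  finally show ?thesis .
qed

lemma fac:
  fixes x y a P :: real
  assumes "x > 0" "y > 0" "x^2 > \<bar>P\<bar>" "y^2 > \<bar>P\<bar>" "\<bar>a\<bar> \<le> \<bar>P\<bar>"
  shows "(y - sqrt \<bar>P\<bar>)/y \<le> 1 + a/(x*y) \<and> 1 + a/(x*y) \<le> 2 \<and> 0 < (y - sqrt \<bar>P\<bar>)/y"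
proof -
  have sx: "sqrt \<bar>P\<bar> < x" using assms(1,3) real_sqrt_less_mono[of "\<bar>P\<bar>" "x^2"] by simp
  have sy: "sqrt \<bar>P\<bar> < y" using assms(2,4) real_sqrt_less_mono[of "\<bar>P\<bar>" "y^2"] by simp
  have xy: "x*y > 0" using assms by simp
  have b1: "\<bar>a/(x*y)\<bar> \<le> sqrt \<bar>P\<bar> / y"
  proof -
    have "\<bar>a/(x*y)\<bar> = \<bar>a\<bar>/(x*y)" using xy by simp
    also have "\<dots> \<le> \<bar>P\<bar>/(x*y)" using assms(5) xy by (simp add: divide_right_mono)
    also have "\<dots> \<le> \<bar>P\<bar>/(sqrt \<bar>P\<bar> * y)"
    proof (cases "P = 0")
      case True then show ?thesis by simp
    next
      case False
      then have "sqrt \<bar>P\<bar> > 0" by simp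
      then show ?thesis using sx assms(2) xy by (intro divide_left_mono) (auto intro: mult_right_mono)
    qed
    also have "\<dots> = sqrt \<bar>P\<bar> / y"
    proof (cases "P = 0")
      case False
      have ss: "\<bar>P\<bar> = sqrt \<bar>P\<bar> * sqrt \<bar>P\<bar>" by simp
      have "sqrt \<bar>P\<bar> > 0" using False by simp
      then show ?thesis using assms(2) by (subst ss) (simp add: field_simps)
    qed simp
    finally show ?thesis .
  qed
  have "sqrt \<bar>P\<bar>/y < 1" using sy assms(2) by simp
  moreover have "(y - sqrt \<bar>P\<bar>)/y = 1 - sqrt \<bar>P\<bar>/y" using assms(2) by (simp add: field_simps)
  moreover have "0 < sqrt \<bar>P\<bar>/y \<or> sqrt \<bar>P\<bar>/y = 0" using assms(2) by auto
  moreover have "- \<bar>a/(x*y)\<bar> \<le> a/(x*y) \<and> a/(x*y) \<le> \<bar>a/(x*y)\<bar>" by linarith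
  ultimately show ?thesis using b1 sy assms(2) by (smt (verit) divide_pos_pos)
qed

lemma step_pos:
  fixes x y u v a P :: real
  assumes "x > 0" "y > 0" "u > 0" "v > 0" "x^2 > \<bar>P\<bar>" "y^2 > \<bar>P\<bar>" "u^2 > \<bar>P\<bar>" "v^2 > \<bar>P\<bar>"
    "\<bar>a\<bar> \<le> \<bar>P\<bar>"
    and "x - u = a*(1/u+1/x)" "y - v = a*(1/v+1/y)"
  shows "(u = v) = (x = y)"
proof -
  have e: "(x-y)*(1 + a/(x*y)) = (u-v)*(1 - a/(u*v))" using step_id assms by blast
  have f1: "1 + a/(x*y) > 0" using fac[OF assms(1,2,5,6,9)] by linarith
  have f2: "1 + (-a)/(u*v) > 0" using fac[OF assms(3,4,7,8), of "-a"] assms(9) by force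
  show ?thesis using e f1 f2 by auto
qed

lemma lip:
  fixes x y u v a P :: real
  assumes "x > 0" "y > 0" "u > 0" "v > 0" "x^2 > \<bar>P\<bar>" "y^2 > \<bar>P\<bar>" "u^2 > \<bar>P\<bar>" "v^2 > \<bar>P\<bar>"
    "\<bar>a\<bar> \<le> \<bar>P\<bar>"
    and "x - u = a*(1/u+1/x)" "y - v = a*(1/v+1/y)"
  shows "\<bar>x-y\<bar> \<le> 2*y/(y - sqrt \<bar>P\<bar>) * \<bar>u-v\<bar> \<and> \<bar>u-v\<bar> \<le> 2*v/(v - sqrt \<bar>P\<bar>) * \<bar>x-y\<bar>"
proof -
  have e: "(x-y)*(1 + a/(x*y)) = (u-v)*(1 + (-a)/(u*v))" using step_id assms by simp
  have F: "(y - sqrt \<bar>P\<bar>)/y \<le> 1 + a/(x*y) \<and> 1 + a/(x*y) \<le> 2 \<and> 0 < (y - sqrt \<bar>P\<bar>)/y"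
    using fac[OF assms(1,2,5,6,9)] .
  have G: "(v - sqrt \<bar>P\<bar>)/v \<le> 1 + (-a)/(u*v) \<and> 1 + (-a)/(u*v) \<le> 2 \<and> 0 < (v - sqrt \<bar>P\<bar>)/v"
    using fac[OF assms(3,4,7,8), of "-a"] assms(9) by force
  have e2: "\<bar>x-y\<bar>*(1 + a/(x*y)) = \<bar>u-v\<bar>*(1 + (-a)/(u*v))"
  proof -
    have "\<bar>(x-y)*(1 + a/(x*y))\<bar> = \<bar>(u-v)*(1 + (-a)/(u*v))\<bar>" using e by simp
    moreover have "\<bar>1 + a/(x*y)\<bar> = 1 + a/(x*y)" "\<bar>1 + (-a)/(u*v)\<bar> = 1 + (-a)/(u*v)"
      using F G by linarith+
    ultimately show ?thesis by (simp only: abs_mult)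
  qed
  have "\<bar>x-y\<bar> * ((y - sqrt \<bar>P\<bar>)/y) \<le> \<bar>x-y\<bar>*(1 + a/(x*y))"
    using F by (intro mult_left_mono) auto
  also have "\<dots> \<le> \<bar>u-v\<bar> * 2" unfolding e2 using G by (intro mult_left_mono) auto
  finally have "\<bar>x-y\<bar> * ((y - sqrt \<bar>P\<bar>)/y) \<le> \<bar>u-v\<bar> * 2" .
  then have A: "\<bar>x-y\<bar> \<le> 2*y/(y - sqrt \<bar>P\<bar>) * \<bar>u-v\<bar>"
    using F assms(2) by (simp add: field_simps)
  have "\<bar>u-v\<bar> * ((v - sqrt \<bar>P\<bar>)/v) \<le> \<bar>u-v\<bar>*(1 + (-a)/(u*v))"
    using G by (intro mult_left_mono) auto
  also have "\<dots> \<le> \<bar>x-y\<bar> * 2" unfolding e2[symmetric] using F by (intro mult_left_mono) auto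
  finally have "\<bar>u-v\<bar> * ((v - sqrt \<bar>P\<bar>)/v) \<le> \<bar>x-y\<bar> * 2" .
  then have B: "\<bar>u-v\<bar> \<le> 2*v/(v - sqrt \<bar>P\<bar>) * \<bar>x-y\<bar>"
    using G assms(4) by (simp add: field_simps)
  show ?thesis using A B by blast
qed

lemma uniq:
  fixes u v a :: "nat \<Rightarrow> real" and P :: real
  assumes pos: "\<And>k. lo \<le> k \<Longrightarrow> k \<le> hi \<Longrightarrow> u k > 0 \<and> (u k)^2 > \<bar>P\<bar> \<and> v k > 0 \<and> (v k)^2 > \<bar>P\<bar>"
    and rec: "\<And>k. lo \<le> k \<Longrightarrow> k < hi \<Longrightarrow> u (Suc k) - u k = a k * (1/u k + 1/u (Suc k))
          \<and> v (Suc k) - v k = a k * (1/v k + 1/v (Suc k)) \<and> \<bar>a k\<bar> \<le> \<bar>P\<bar>"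
    and p: "lo \<le> p" "p \<le> hi" "u p = v p"
    and k: "lo \<le> k" "k \<le> hi"
  shows "u k = v k"
proof -
  have st: "(u k = v k) = (u (Suc k) = v (Suc k))" if "lo \<le> k" "k < hi" for k
    using step_pos[of "u (Suc k)" "v (Suc k)" "u k" "v k" P "a k"] pos[of k] pos[of "Suc k"] rec[of k] that
    by auto
  have fw: "p + n \<le> hi \<Longrightarrow> u (p+n) = v (p+n)" for n
  proof (induction n)
    case 0 then show ?case using p by simp
  next
    case (Suc n) then show ?case using st[of "p+n"] p by auto
  qed
  have bw: "n \<le> p - lo \<Longrightarrow> u (p-n) = v (p-n)" for n
  proof (induction n)
    case 0 then show ?case using p by simp
  next
    case (Suc n)
    then have "Suc (p - Suc n) = p - n" by simp
    then show ?case using st[of "p - Suc n"] p Suc by auto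
  qed
  show ?thesis
  proof (cases "p \<le> k")
    case True then show ?thesis using fw[of "k-p"] k by simp
  next
    case False then show ?thesis using bw[of "p-k"] k by simp
  qed
qed


lemma refl:
  fixes w theta :: "nat \<Rightarrow> real"
  assumes sol: "zd_solution P dth theta w" and adm: "admissible P w" and c: "c \<ge> 2"
    and anti: "\<And>k. 1 \<le> k \<Longrightarrow> k+1 < c \<Longrightarrow> sin (theta k) + sin (theta (c-1-k)) = 0"
    and k: "1 \<le> k" "k < c"
  shows "w (c-k) = w k"
proof -
  define v where "v = (\<lambda>k. w (c-k))"
  define a where "a = (\<lambda>k. P * sin (theta k))"
  have S: "\<And>k. k \<ge> 1 \<Longrightarrow> w (Suc k) - w k = a k * (1 / w k + 1 / w (Suc k))"
    using sol unfolding zd_solution_def a_def by blast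
  have A: "\<And>k. k \<ge> 1 \<Longrightarrow> w k > 0 \<and> (w k)^2 > \<bar>P\<bar>" using adm unfolding admissible_def by blast
  have ab: "\<bar>a k\<bar> \<le> \<bar>P\<bar>" for k
    unfolding a_def abs_mult using abs_sin_le_one[of "theta k"]
    by (simp add: mult_left_le)
  have pos: "\<And>k. 1 \<le> k \<Longrightarrow> k \<le> c-1 \<Longrightarrow> w k > 0 \<and> (w k)^2 > \<bar>P\<bar> \<and> v k > 0 \<and> (v k)^2 > \<bar>P\<bar>"
    unfolding v_def using A by auto
  have rec: "w (Suc k) - w k = a k * (1/w k + 1/w (Suc k))
          \<and> v (Suc k) - v k = a k * (1/v k + 1/v (Suc k)) \<and> \<bar>a k\<bar> \<le> \<bar>P\<bar>"
    if "1 \<le> k" "k < c-1" for k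
  proof -
    define j where "j = c-1-k"
    have j1: "j \<ge> 1" "Suc j = c - k" "c - Suc k = j" using that by (auto simp: j_def)
    have kc: "k+1 < c" using that(2) by linarith
    have "sin (theta j) = - sin (theta k)" using anti[OF that(1) kc] unfolding j_def by simp
    then have sj: "a j = - a k" unfolding a_def by simp
    have "v (Suc k) - v k = w j - w (Suc j)" unfolding v_def using j1 by simp
    also have "\<dots> = a k * (1/v k + 1/v (Suc k))" using S[OF j1(1)] sj unfolding v_def using j1
      by (simp add: algebra_simps)
    finally show ?thesis using S[OF that(1)] ab by simp
  qed
  obtain p where p: "1 \<le> p" "p \<le> c-1" "w p = v p"
  proof (cases "even c")
    case True
    then show ?thesis using that[of "c div 2"] c unfolding v_def by (auto elim!: evenE)
  next
    case False
    then obtain j where cj: "c = 2*j+1" by (auto elim!: oddE)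
    then have j1: "j \<ge> 1" using c by simp
    have "sin (theta j) = 0" using anti[of j] cj j1 by simp
    then have "w (Suc j) = w j" using S[OF j1] unfolding a_def by simp
    then show ?thesis using that[of j] cj j1 unfolding v_def by simp
  qed
  have "w k = v k" using uniq[of 1 "c-1" w P v a p k] pos rec p k by auto
  then show ?thesis unfolding v_def by simp
qed

lemma periodic:
  fixes w theta :: "nat \<Rightarrow> real"
  assumes sol: "zd_solution P dth theta w" and adm: "admissible P w" and N: "N \<ge> 1"
    and b: "b \<ge> 2"
    and anti: "\<And>j k. 1 \<le> k \<Longrightarrow> k+1 < b + j*N \<Longrightarrow> sin (theta k) + sin (theta (b + j*N - 1 - k)) = 0"
  shows "periodic_seq N w"
  unfolding periodic_seq_def
proof (intro allI impI)
  fix k :: nat assume k: "k \<ge> 1"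
  define c where "c = b + (k+2)*N"
  have cN: "c + N = b + (k+3)*N" unfolding c_def by (simp add: algebra_simps)
  have h1: "k*N \<ge> k" using mult_le_mono2[OF N, of k] by simp
  have "c = b + k*N + 2*N" unfolding c_def by (simp add: add_mult_distrib)
  then have ck: "c > k + N + 1" using N b h1 by linarith
  have r1: "w (c-k) = w k"
    using refl[OF sol adm, of c k] anti[of _ "k+2"] b k ck unfolding c_def by auto
  have an2: "sin (theta m) + sin (theta (c + N - 1 - m)) = 0" if "1 \<le> m" "m+1 < c+N" for m
    using anti[of m "k+3"] that unfolding cN by blast
  have r2: "w ((c+N)-(k+N)) = w (k+N)"
    using refl[OF sol adm, of "c+N" "k+N"] an2 b k ck by auto
  show "w (k+N) = w k" using r1 r2 by simp
qed


lemma per_red: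
  assumes "periodic_seq N w" "N \<ge> 1"
  shows "k \<ge> 1 \<Longrightarrow> w k = w ((k-1) mod N + 1)"
proof (induction k rule: less_induct)
  case (less k)
  show ?case
  proof (cases "k \<le> N")
    case True then show ?thesis using less.prems by simp
  next
    case False
    define k' where "k' = k - N"
    have k': "k' \<ge> 1" "k' < k" "k = k' + N" using False assms(2) by (auto simp: k'_def)
    have "w k = w k'" using assms(1) k' unfolding periodic_seq_def by auto
    also have "\<dots> = w ((k'-1) mod N + 1)" using less.IH k' by auto
    also have "(k'-1) mod N = (k-1) mod N"
    proof -
      have "k - 1 = (k'-1) + N" using k' by simp
      then show ?thesis by simp
    qed
    finally show ?thesis .
  qed
qed

lemma theta_lin:
  assumes "zd_solution P dth theta w"
  shows "k \<ge> 1 \<Longrightarrow> theta k = theta 1 + (real k - 1) * dth"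
proof (induction k)
  case 0 then show ?case by simp
next
  case (Suc k)
  show ?case
  proof (cases "k = 0")
    case True then show ?thesis by simp
  next
    case False
    then have "theta (Suc k) = theta k + dth" using assms unfolding zd_solution_def by auto
    then show ?thesis using Suc False by (simp add: algebra_simps)
  qed
qed


lemma anti_exists:
  fixes theta w :: "nat \<Rightarrow> real"
  assumes sol: "zd_solution P (2 * pi / real N) theta w" and N: "N \<ge> 1"
    and sym: "\<exists>k0\<ge>1. \<exists>m::int. theta k0 = 2 * pi * real_of_int m
                              \<or> theta k0 = (2 * pi / real N) / 2 + 2 * pi * real_of_int m"
  shows "\<exists>b\<ge>2. \<forall>j k. 1 \<le> k \<longrightarrow> k+1 < b + j*N \<longrightarrow> sin (theta k) + sin (theta (b + j*N - 1 - k)) = 0"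
proof -
  define d where "d = 2 * pi / real N"
  have Nd: "real N * d = 2*pi" using N unfolding d_def by simp
  have TL: "\<And>k. k \<ge> 1 \<Longrightarrow> theta k = theta 1 + (real k - 1) * d"
    using theta_lin[OF sol] unfolding d_def by blast
  have key: "theta k + theta (c-1-k) = 2 * theta 1 + (real c - 3) * d" if "1 \<le> k" "k+1 < c" for k c
  proof -
    have r: "real (c-1-k) = real c - 1 - real k" using that by (simp add: of_nat_diff)
    have c1: "c-1-k \<ge> 1" using that by simp
    show ?thesis using TL[OF that(1)] TL[OF c1] r by (simp add: algebra_simps)
  qed
  obtain k0 m where k0: "k0 \<ge> 1" and m: "theta k0 = 2 * pi * real_of_int m
      \<or> theta k0 = d / 2 + 2 * pi * real_of_int m" using sym unfolding d_def by blast
  have t1: "theta 1 = theta k0 - (real k0 - 1) * d" using TL[OF k0] by simp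
  show ?thesis
  proof (cases "theta k0 = 2 * pi * real_of_int m")
    case True
    show ?thesis
    proof (intro exI[of _ "2*k0+1"] conjI allI impI)
      show "2 \<le> 2*k0+1" using k0 by simp
      fix j k assume a: "1 \<le> k" "k+1 < 2*k0+1 + j*N"
      have "theta k + theta (2*k0+1 + j*N - 1 - k) = 2 * theta k0 + real j * (real N * d)"
        using key[OF a] t1 by (simp add: algebra_simps)
      also have "\<dots> = 2*pi*real_of_int (2*m + int j)" using True Nd by (simp add: algebra_simps)
      finally show "sin (theta k) + sin (theta (2*k0+1 + j*N - 1 - k)) = 0" by (rule sin_sum_2pi)
    qed
  next
    case False
    then have T: "theta k0 = d / 2 + 2 * pi * real_of_int m" using m by blast
    show ?thesis
    proof (intro exI[of _ "2*k0"] conjI allI impI)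
      show "2 \<le> 2*k0" using k0 by simp
      fix j k assume a: "1 \<le> k" "k+1 < 2*k0 + j*N"
      have "theta k + theta (2*k0 + j*N - 1 - k) = 2 * theta k0 - d + real j * (real N * d)"
        using key[OF a] t1 by (simp add: algebra_simps)
      also have "\<dots> = 2*pi*real_of_int (2*m + int j)" using T Nd by (simp add: algebra_simps)
      finally show "sin (theta k) + sin (theta (2*k0 + j*N - 1 - k)) = 0" by (rule sin_sum_2pi)
    qed
  qed
qed


theorem corollary1:
  fixes N :: nat and P :: real and theta omega :: "nat \<Rightarrow> real"
  assumes N3: "N \<ge> 3"
    and P0: "P \<noteq> 0"
    and sol: "zd_solution P (2 * pi / real N) theta omega"
    and adm: "admissible P omega"
    and sym: "\<exists>k0\<ge>1. \<exists>m::int. theta k0 = 2 * pi * real_of_int m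
                              \<or> theta k0 = (2 * pi / real N) / 2 + 2 * pi * real_of_int m"
  shows "periodic_seq N omega
    \<and> (\<forall>k1 \<ge> 1. \<forall>\<epsilon> omega'. \<epsilon> \<noteq> 0 \<and> omega' k1 = omega k1 + \<epsilon>
          \<and> zd_solution P (2 * pi / real N) theta omega' \<and> admissible P omega'
          \<longrightarrow> periodic_seq N omega' \<and> (\<forall>k\<ge>1. omega' k \<noteq> omega k))
    \<and> (\<forall>k1 \<ge> 1. \<forall>e > 0. \<exists>\<delta> > 0. \<forall>\<epsilon> omega'.
          \<epsilon> \<noteq> 0 \<and> \<bar>\<epsilon>\<bar> < \<delta> \<and> omega' k1 = omega k1 + \<epsilon>
          \<and> zd_solution P (2 * pi / real N) theta omega' \<and> admissible P omega'
          \<longrightarrow> (\<forall>k\<ge>1. \<bar>omega' k - omega k\<bar> \<le> e))"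
proof -
  have N1: "N \<ge> 1" using N3 by simp
  obtain b where b: "b \<ge> 2"
    and anti: "\<And>j k. 1 \<le> k \<Longrightarrow> k+1 < b + j*N \<Longrightarrow> sin (theta k) + sin (theta (b + j*N - 1 - k)) = 0"
    using anti_exists[OF sol N1 sym] by blast
  have PER: "periodic_seq N w" if "zd_solution P (2 * pi / real N) theta w" "admissible P w" for w
    using periodic[OF that N1 b anti] by blast
  define a where "a = (\<lambda>k. P * sin (theta k))"
  have ab: "\<bar>a k\<bar> \<le> \<bar>P\<bar>" for k
    unfolding a_def abs_mult using abs_sin_le_one[of "theta k"]
    by (simp add: mult_left_le)
  have S: "\<And>w k. zd_solution P (2 * pi / real N) theta w \<Longrightarrow> k \<ge> 1 \<Longrightarrow>
      w (Suc k) - w k = a k * (1 / w k + 1 / w (Suc k))"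
    unfolding zd_solution_def a_def by blast
  have A: "\<And>w k. admissible P w \<Longrightarrow> k \<ge> 1 \<Longrightarrow> w k > 0 \<and> (w k)^2 > \<bar>P\<bar>"
    unfolding admissible_def by blast
  have part2: "periodic_seq N w \<and> (\<forall>k\<ge>1. w k \<noteq> omega k)"
    if h: "\<epsilon> \<noteq> 0" "w k1 = omega k1 + \<epsilon>" "zd_solution P (2 * pi / real N) theta w" "admissible P w"
      and k1: "k1 \<ge> 1" for k1 \<epsilon> w
  proof (intro conjI allI impI)
    show "periodic_seq N w" using PER h by blast
    fix k :: nat assume k: "k \<ge> 1"
    show "w k \<noteq> omega k"
    proof
      assume eq: "w k = omega k"
      have "w k1 = omega k1"
        using uniq[of 1 "max k k1" w P omega a k k1] A[OF h(4)] A[OF adm] S[OF h(3)] S[OF sol] ab k k1 eq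
        by auto
      then show False using h by simp
    qed
  qed
  have part3: "\<exists>\<delta> > 0. \<forall>\<epsilon> w.
          \<epsilon> \<noteq> 0 \<and> \<bar>\<epsilon>\<bar> < \<delta> \<and> w k1 = omega k1 + \<epsilon>
          \<and> zd_solution P (2 * pi / real N) theta w \<and> admissible P w
          \<longrightarrow> (\<forall>k\<ge>1. \<bar>w k - omega k\<bar> \<le> e)" if k1: "k1 \<ge> 1" and e: "e > 0" for k1 e
  proof -
    define M where "M = k1 + N"
    define K where "K = (\<lambda>j. 2 * omega j / (omega j - sqrt \<bar>P\<bar>))"
    define L where "L = 1 + (\<Sum>j\<in>{1..M}. K j)"
    have Kpos: "K j > 0" if "j \<ge> 1" for j
    proof -
      have "sqrt \<bar>P\<bar> < omega j" using A[OF adm that] real_sqrt_less_mono[of "\<bar>P\<bar>" "(omega j)^2"] by simp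
      then show ?thesis using A[OF adm that] unfolding K_def by simp
    qed
    have "(\<Sum>j\<in>{1..M}. K j) \<ge> 0" using Kpos by (intro sum_nonneg) (auto simp: less_imp_le)
    then have L1: "L \<ge> 1" unfolding L_def by simp
    have LK: "K j \<le> L" if "1 \<le> j" "j \<le> M" for j
    proof -
      have "K j \<le> (\<Sum>j\<in>{1..M}. K j)"
        using that Kpos by (intro member_le_sum) (auto simp: less_imp_le)
      then show ?thesis unfolding L_def by simp
    qed
    have LM: "L^M > 0" using L1 by simp
    show ?thesis
    proof (intro exI[of _ "e / L^M"] conjI allI impI)
      show "e / L^M > 0" using e LM by simp
      fix \<epsilon> w and k :: nat
      assume h: "\<epsilon> \<noteq> 0 \<and> \<bar>\<epsilon>\<bar> < e / L ^ M \<and> w k1 = omega k1 + \<epsilon> \<and>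
           zd_solution P (2 * pi / real N) theta w \<and> admissible P w"
      assume k: "k \<ge> 1"
      have sw: "zd_solution P (2 * pi / real N) theta w" and aw: "admissible P w" using h by auto
      define D where "D = (\<lambda>j. \<bar>w j - omega j\<bar>)"
      have Dk1: "D k1 = \<bar>\<epsilon>\<bar>" using h unfolding D_def by simp
      have LIP: "D (Suc j) \<le> K (Suc j) * D j \<and> D j \<le> K j * D (Suc j)" if "j \<ge> 1" for j
        using lip[of "w (Suc j)" "omega (Suc j)" "w j" "omega j" P "a j"]
          A[OF aw that] A[OF adm that] A[OF aw, of "Suc j"] A[OF adm, of "Suc j"]
          ab S[OF sw that] S[OF sol that] that
        unfolding D_def K_def by simp
      have fw: "k1 + n \<le> M \<Longrightarrow> D (k1+n) \<le> L^n * \<bar>\<epsilon>\<bar>" for n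
      proof (induction n)
        case 0 then show ?case using Dk1 by simp
      next
        case (Suc n)
        have "D (k1 + Suc n) \<le> K (Suc (k1+n)) * D (k1+n)" using LIP[of "k1+n"] k1 by simp
        also have "\<dots> \<le> L * (L^n * \<bar>\<epsilon>\<bar>)"
          using Suc LK[of "Suc (k1+n)"] Kpos[of "Suc (k1+n)"] k1 unfolding D_def
          by (intro mult_mono) auto
        finally show ?case by simp
      qed
      have bw: "n < k1 \<Longrightarrow> D (k1-n) \<le> L^n * \<bar>\<epsilon>\<bar>" for n
      proof (induction n)
        case 0 then show ?case using Dk1 by simp
      next
        case (Suc n)
        have j: "k1 - Suc n \<ge> 1" "Suc (k1 - Suc n) = k1 - n" using Suc.prems by auto
        have "k1 - Suc n \<le> M" unfolding M_def by simp
        then have KL: "K (k1 - Suc n) \<le> L" using LK j by blast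
        have "D (k1 - Suc n) \<le> K (k1 - Suc n) * D (k1 - n)" using LIP[OF j(1)] j(2) by simp
        also have "\<dots> \<le> L * (L^n * \<bar>\<epsilon>\<bar>)"
          using Suc KL Kpos[of "k1 - Suc n"] j L1 unfolding D_def
          by (intro mult_mono) auto
        finally show ?case by simp
      qed
      have bnd: "D j \<le> L^M * \<bar>\<epsilon>\<bar>" if "1 \<le> j" "j \<le> M" for j
      proof -
        obtain n where n: "n \<le> M" "D j \<le> L^n * \<bar>\<epsilon>\<bar>"
        proof (cases "k1 \<le> j")
          case True
          then show ?thesis using that(1)[of "j - k1"] fw[of "j-k1"] \<open>j \<le> M\<close> by auto
        next
          case False
          then show ?thesis using that(1)[of "k1 - j"] bw[of "k1-j"] \<open>1 \<le> j\<close> unfolding M_def by auto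
        qed
        have "L^n \<le> L^M" using L1 n(1) by (rule power_increasing[rotated])
        then show ?thesis using n(2) by (meson abs_ge_zero mult_right_mono order_trans)
      qed
      define r where "r = (k-1) mod N + 1"
      have "(k-1) mod N < N" using N1 by simp
      then have r: "1 \<le> r" "r \<le> M" unfolding r_def M_def by auto
      have "D k = D r"
        using per_red[OF PER[OF sw aw] N1 k] per_red[OF PER[OF sol adm] N1 k]
        unfolding D_def r_def by simp
      also have "\<dots> \<le> L^M * \<bar>\<epsilon>\<bar>" using bnd r by blast
      also have "\<dots> \<le> L^M * (e / L^M)" using h LM by (intro mult_left_mono) auto
      also have "\<dots> = e" using LM by (metis less_irrefl nonzero_mult_div_cancel_left times_divide_eq_right)
      finally show "\<bar>w k - omega k\<bar> \<le> e" unfolding D_def .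
    qed
  qed
  show ?thesis using PER[OF sol adm] part2 part3 by blast
qed

end
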